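(* For every policy $\pi$, every bounded measurable heuristic $h:\mathcal S\to\mathbb R$ and every mixing coefficient $\lambda\in[0,1]$, $$V^*(d_0)-V^\pi(d_0)=\mathrm{Regret}(h,\lambda,\pi)+\mathrm{Bias}(h,\lambda,\pi),$$ where $$\mathrm{Regret}(h,\lambda,\pi):=\lambda\big(\widetilde V^*(d_0)-\widetilde V^\pi(d_0)\big)+\frac{1-\lambda}{1-\gamma}\big(\widetilde V^*(d^\pi)-\widetilde V^\pi(d^\pi)\big),$$ $$\mathrm{Bias}(h,\lambda,\pi):=\big(V^*(d_0)-\widetilde V^*(d_0)\big)+\frac{\gamma(1-\lambda)}{1-\gamma}\,\mathbb E_{(s,a)\sim d^\pi}\,\mathbb E_{s'\sim P(\cdot|s,a)}\big[h(s')-\widetilde V^*(s')\big].$$ (Here $\widetilde V^\pi,\widetilde V^*$ are computed in the reshaped MDP built from $h$ and $\lambda$.) Moreover, for every constant $b\in\mathbb R$, $\mathrm{Bias}(h+b,\lambda,\pi)=\mathrm{Bias}(h,\lambda,\pi)$ and $\mathrm{Regret}(h+b,\lambda,\pi)=\mathrm{Regret}(h,\lambda,\pi)$, where the left-hand sides use the reshaped MDP built from the heuristic $h+b$.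
   Context: Let $\mathcal M=(\mathcal S,\mathcal A,P,r,\gamma)$ be a discounted MDP with transition kernel $P(\cdot|s,a)$, reward $r:\mathcal S\times\mathcal A\to[0,1]$ and discount $\gamma\in[0,1)$. A policy $\pi$ is a Markov kernel from $\mathcal S$ to distributions on $\mathcal A$. For a state $s$ (resp. a distribution $d_0$ on $\mathcal S$), $\rho^\pi(s)$ (resp. $\rho^\pi(d_0)$) denotes the law of the trajectory $s_0,a_0,s_1,a_1,\dots$ with $s_0=s$ (resp. $s_0\sim d_0$), $a_t\sim\pi(\cdot|s_t)$, $s_{t+1}\sim P(\cdot|s_t,a_t)$. $V^\pi(s)=\mathbb E_{\rho^\pi(s)}[\sum_{t\ge0}\gamma^t r(s_t,a_t)]$, and $V^*=V^{\pi^*}=\sup_\pi V^\pi$ for an optimal policy $\pi^*$ (assumed to exist). For $V:\mathcal S\to\mathbb R$ and a distribution $d$ on $\mathcal S$, $V(d)=\mathbb E_{s\sim d}[V(s)]$. A fixed initial distribution $d_0$ is given; $d_t^\pi$ is the law of $s_t$ under $\rho^\pi(d_0)$, $d^\pi=(1-\gamma)\sum_{t\ge0}\gamma^t d_t^\pi$, and $d^\pi(s,a)=d^\pi(s)\pi(a|s)$. Given a bounded heuristic $h:\mathcal S\to\mathbb R$ and $\lambda\in[0,1]$, the reshaped MDP is $\widetilde{\mathcal M}=(\mathcal S,\mathcal A,P,\widetilde r,\widetilde\gamma)$ with $\widetilde r(s,a)=r(s,a)+(1-\lambda)\gamma\,\mathbb E_{s'\sim P(\cdot|s,a)}[h(s')]$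 and $\widetilde\gamma=\lambda\gamma$. $\widetilde V^\pi(s)=\mathbb E_{\rho^\pi(s)}[\sum_{t\ge0}(\lambda\gamma)^t\widetilde r(s_t,a_t)]$ is the value of $\pi$ in $\widetilde{\mathcal M}$, and $\widetilde V^*=\sup_\pi\widetilde V^\pi$, attained by an optimal policy $\widetilde\pi^*$ of $\widetilde{\mathcal M}$ (assumed to exist). *)

theory Defs
  imports "HOL-Probability.Probability"
begin

definition policies :: "'s measure \<Rightarrow> 'a measure \<Rightarrow> ('s \<Rightarrow> 'a measure) set" where
  "policies S A = S \<rightarrow>\<^sub>M prob_algebra A"

definition step_dist :: "('s \<times> 'a \<Rightarrow> 's measure) \<Rightarrow> ('s \<Rightarrow> 'a measure) \<Rightarrow> 's measure \<Rightarrow> 's measure" where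
  "step_dist P p mu = bind mu (\<lambda>s. bind (p s) (\<lambda>a. P (s, a)))"

definition state_dist :: "('s \<times> 'a \<Rightarrow> 's measure) \<Rightarrow> ('s \<Rightarrow> 'a measure) \<Rightarrow> 's measure \<Rightarrow> nat \<Rightarrow> 's measure" where
  "state_dist P p mu t = (step_dist P p ^^ t) mu"

definition pol_avg :: "('s \<Rightarrow> 'a measure) \<Rightarrow> ('s \<times> 'a \<Rightarrow> real) \<Rightarrow> 's \<Rightarrow> real" where
  "pol_avg p f s = (\<integral>a. f (s, a) \<partial>(p s))"

text \<open>V^p(s) = E_{rho^p(s)} sum_t g^t r(s_t,a_t) = sum_t g^t E[r(s_t,a_t)].\<close>
definition pol_value :: "'s measure \<Rightarrow> real \<Rightarrow> ('s \<times> 'a \<Rightarrow> real) \<Rightarrow> ('s \<times> 'a \<Rightarrow> 's measure)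
    \<Rightarrow> ('s \<Rightarrow> 'a measure) \<Rightarrow> 's \<Rightarrow> real" where
  "pol_value S g r P p s = (\<Sum>t. g ^ t * (\<integral>x. pol_avg p r x \<partial>(state_dist P p (return S s) t)))"

definition opt_value :: "'s measure \<Rightarrow> 'a measure \<Rightarrow> real \<Rightarrow> ('s \<times> 'a \<Rightarrow> real)
    \<Rightarrow> ('s \<times> 'a \<Rightarrow> 's measure) \<Rightarrow> 's \<Rightarrow> real" where
  "opt_value S A g r P s = (SUP p \<in> policies S A. pol_value S g r P p s)"

definition at_dist :: "('s \<Rightarrow> real) \<Rightarrow> 's measure \<Rightarrow> real" where
  "at_dist V d = (\<integral>s. V s \<partial>d)"

text \<open>Expectation under the discounted occupancy d^p = (1-g) sum_t g^t d_t^p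
  (d_t^p the law of s_t under rho^p(d0)).\<close>
definition occ_expect :: "real \<Rightarrow> ('s \<times> 'a \<Rightarrow> 's measure) \<Rightarrow> ('s \<Rightarrow> 'a measure) \<Rightarrow> 's measure
    \<Rightarrow> ('s \<Rightarrow> real) \<Rightarrow> real" where
  "occ_expect g P p d0 f = (1 - g) * (\<Sum>t. g ^ t * (\<integral>s. f s \<partial>(state_dist P p d0 t)))"

text \<open>Reshaped reward r~(s,a) = r(s,a) + (1-lam) g E_{s'~P(.|s,a)} h(s'); discount lam*g.\<close>
definition reshaped_reward :: "real \<Rightarrow> real \<Rightarrow> ('s \<times> 'a \<Rightarrow> real) \<Rightarrow> ('s \<times> 'a \<Rightarrow> 's measure)
    \<Rightarrow> ('s \<Rightarrow> real) \<Rightarrow> 's \<times> 'a \<Rightarrow> real" where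
  "reshaped_reward g lam r P h sa = r sa + (1 - lam) * g * (\<integral>s'. h s' \<partial>(P sa))"

definition Regret :: "'s measure \<Rightarrow> 'a measure \<Rightarrow> real \<Rightarrow> ('s \<times> 'a \<Rightarrow> real)
    \<Rightarrow> ('s \<times> 'a \<Rightarrow> 's measure) \<Rightarrow> 's measure \<Rightarrow> ('s \<Rightarrow> real) \<Rightarrow> real \<Rightarrow> ('s \<Rightarrow> 'a measure) \<Rightarrow> real" where
  "Regret S A g r P d0 h lam p =
     (let rt = reshaped_reward g lam r P h;
          Vts = opt_value S A (lam * g) rt P;
          Vtp = pol_value S (lam * g) rt P p
      in lam * (at_dist Vts d0 - at_dist Vtp d0)
         + (1 - lam) / (1 - g) * (occ_expect g P p d0 Vts - occ_expect g P p d0 Vtp))"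

definition Bias :: "'s measure \<Rightarrow> 'a measure \<Rightarrow> real \<Rightarrow> ('s \<times> 'a \<Rightarrow> real)
    \<Rightarrow> ('s \<times> 'a \<Rightarrow> 's measure) \<Rightarrow> 's measure \<Rightarrow> ('s \<Rightarrow> real) \<Rightarrow> real \<Rightarrow> ('s \<Rightarrow> 'a measure) \<Rightarrow> real" where
  "Bias S A g r P d0 h lam p =
     (let rt = reshaped_reward g lam r P h;
          Vts = opt_value S A (lam * g) rt P
      in (at_dist (opt_value S A g r P) d0 - at_dist Vts d0)
         + g * (1 - lam) / (1 - g) *
           occ_expect g P p d0 (pol_avg p (\<lambda>sa. \<integral>s'. h s' - Vts s' \<partial>(P sa))))"

end

theory Submission
  imports Defs
begin

lemma pa_facts:
  assumes M: "M \<in> space (prob_algebra X)"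
  shows "prob_space M" "sets M = sets X" "space M = space X"
  using M by (auto simp: space_prob_algebra intro!: sets_eq_imp_space_eq)

lemma pa_meas:
  assumes M: "M \<in> space (prob_algebra X)" and f: "f \<in> borel_measurable X"
  shows "f \<in> borel_measurable M"
  using f measurable_cong_sets[OF pa_facts(2)[OF M] refl] by blast

lemma pa_integrable:
  fixes f :: "_ \<Rightarrow> real"
  assumes M: "M \<in> space (prob_algebra X)" and f: "f \<in> borel_measurable X"
    and B: "\<And>x. x \<in> space X \<Longrightarrow> \<bar>f x\<bar> \<le> B"
  shows "integrable M f"
proof -
  interpret prob_space M using pa_facts[OF M] by simp
  show ?thesis
    by (rule integrable_const_bound[where B=B], intro AE_I2) (use B pa_facts(3)[OF M] pa_meas[OF M f] in auto)
qed

lemma pa_bound: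
  fixes f :: "_ \<Rightarrow> real"
  assumes M: "M \<in> space (prob_algebra X)" and f: "f \<in> borel_measurable X"
    and B: "\<And>x. x \<in> space X \<Longrightarrow> \<bar>f x\<bar> \<le> B"
  shows "\<bar>\<integral>x. f x \<partial>M\<bar> \<le> B"
proof -
  interpret prob_space M using pa_facts[OF M] by simp
  have i: "integrable M f" by (rule pa_integrable[OF M f B])
  have "(\<integral>x. f x \<partial>M) \<le> B"
    by (rule integral_le_const[OF i], intro AE_I2) (use B pa_facts(3)[OF M] in force)
  moreover have "-B \<le> (\<integral>x. f x \<partial>M)"
    by (rule integral_ge_const[OF i], intro AE_I2) (use B pa_facts(3)[OF M] in force)
  ultimately show ?thesis by linarith
qed

lemma pa_add_const:
  fixes f :: "_ \<Rightarrow> real"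
  assumes M: "M \<in> space (prob_algebra X)" and f: "f \<in> borel_measurable X"
    and B: "\<And>x. x \<in> space X \<Longrightarrow> \<bar>f x\<bar> \<le> B"
  shows "(\<integral>x. f x + c \<partial>M) = (\<integral>x. f x \<partial>M) + c"
proof -
  interpret prob_space M using pa_facts[OF M] by simp
  show ?thesis using pa_integrable[OF M f B] by (simp add: prob_space)
qed

lemma pa_bind:
  fixes f :: "_ \<Rightarrow> real"
  assumes M: "M \<in> space (prob_algebra Y)" and F: "F \<in> Y \<rightarrow>\<^sub>M prob_algebra X"
    and f: "f \<in> borel_measurable X" and B: "\<And>x. x \<in> space X \<Longrightarrow> \<bar>f x\<bar> \<le> B"
  shows "(\<integral>x. f x \<partial>(bind M F)) = (\<integral>y. (\<integral>x. f x \<partial>F y) \<partial>M)"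
proof -
  interpret prob_space M using pa_facts[OF M] by simp
  have F': "F \<in> M \<rightarrow>\<^sub>M subprob_algebra X"
    using measurable_prob_algebraD[OF F] measurable_cong_sets[OF pa_facts(2)[OF M] refl] by blast
  have "AE y in M. emeasure (F y) (space (F y)) \<le> ennreal 1"
  proof (rule AE_I2)
    fix y assume "y \<in> space M"
    then have "F y \<in> space (prob_algebra X)" using measurable_space[OF F] pa_facts(3)[OF M] by auto
    then show "emeasure (F y) (space (F y)) \<le> ennreal 1"
      using pa_facts(1) prob_space.emeasure_space_1 by fastforce
  qed
  from integral_bind[OF f B F' finite_measure_axioms this] show ?thesis .
qed

lemma ser_facts:
  fixes a :: "nat \<Rightarrow> real"
  assumes a: "\<And>i. \<bar>a i\<bar> \<le> B" and q: "0 \<le> q" "q < 1"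
  shows "summable (\<lambda>i. q ^ i * a i)" "\<bar>\<Sum>i. q ^ i * a i\<bar> \<le> B / (1 - q)"
proof -
  have g: "summable (\<lambda>i. q ^ i * B)" using q by (simp add: summable_mult2)
  have n: "norm (q ^ i * a i) \<le> q ^ i * B" for i
    using a[of i] q by (simp add: abs_mult mult_left_mono)
  show s: "summable (\<lambda>i. q ^ i * a i)"
    by (rule summable_comparison_test'[OF g]) (use n in auto)
  have n': "-(q^i*B) \<le> q^i * a i \<and> q^i*a i \<le> q^i*B" for i
    using n[of i] by (simp add: abs_le_iff)
  have g': "summable (\<lambda>i. - (q ^ i * B))" using g summable_minus by blast
  have "(\<Sum>i. q ^ i * a i) \<le> (\<Sum>i. q ^ i * B)"
    by (rule suminf_le[OF _ s g]) (use n' in auto)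
  moreover have "(\<Sum>i. - (q ^ i * B)) \<le> (\<Sum>i. q ^ i * a i)"
    by (rule suminf_le[OF _ g' s]) (use n' in auto)
  moreover have "(\<Sum>i. - (q ^ i * B)) = - (\<Sum>i. q ^ i * B)" using suminf_minus[OF g] .
  ultimately have "\<bar>\<Sum>i. q ^ i * a i\<bar> \<le> (\<Sum>i. q ^ i * B)" by linarith
  also have "\<dots> = B / (1 - q)" using q by (simp add: suminf_mult2[symmetric] suminf_geometric)
  finally show "\<bar>\<Sum>i. q ^ i * a i\<bar> \<le> B / (1 - q)" .
qed

lemma ser_int:
  fixes f :: "nat \<Rightarrow> _ \<Rightarrow> real"
  assumes M: "M \<in> space (prob_algebra X)" and f: "\<And>i. f i \<in> borel_measurable X"
    and B: "\<And>i x. x \<in> space X \<Longrightarrow> \<bar>f i x\<bar> \<le> B" and q: "0 \<le> q" "q < 1"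
  shows "(\<integral>x. (\<Sum>i. q ^ i * f i x) \<partial>M) = (\<Sum>i. q ^ i * (\<integral>x. f i x \<partial>M))"
proof -
  have Mi: "x \<in> space M \<Longrightarrow> x \<in> space X" for x using pa_facts(3)[OF M] by simp
  have g: "summable (\<lambda>i. q ^ i * B)" using q by (simp add: summable_mult2)
  have n: "norm (q ^ i * f i x) \<le> q ^ i * B" if "x \<in> space X" for i x
    using B[OF that, of i] q by (simp add: abs_mult mult_left_mono)
  have int: "integrable M (\<lambda>x. q ^ i * f i x)" for i
    using pa_integrable[OF M f B] by simp
  have sm: "AE x in M. summable (\<lambda>i. norm (q ^ i * f i x))"
  proof (rule AE_I2)
    fix x assume "x \<in> space M"
    then show "summable (\<lambda>i. norm (q ^ i * f i x))"
      by (intro summable_comparison_test'[OF g]) (use n Mi in auto)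
  qed
  have bi: "norm (\<integral>x. norm (q ^ i * f i x) \<partial>M) \<le> q ^ i * B" for i
  proof -
    note f[measurable]
    have "\<bar>\<integral>x. norm (q ^ i * f i x) \<partial>M\<bar> \<le> q ^ i * B"
      by (rule pa_bound[OF M]) (use n in auto)
    then show ?thesis by simp
  qed
  have ss: "summable (\<lambda>i. \<integral>x. norm (q ^ i * f i x) \<partial>M)"
    by (rule summable_comparison_test'[OF g bi])
  have "(\<integral>x. (\<Sum>i. q ^ i * f i x) \<partial>M) = (\<Sum>i. \<integral>x. q ^ i * f i x \<partial>M)"
    by (rule integral_suminf[OF int sm ss])
  then show ?thesis by simp
qed

locale mdpk =
  fixes S :: "'s measure" and A :: "'a measure" and P :: "'s \<times> 'a \<Rightarrow> 's measure"
    and p :: "'s \<Rightarrow> 'a measure"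
  assumes P: "P \<in> S \<Otimes>\<^sub>M A \<rightarrow>\<^sub>M prob_algebra S"
    and p: "p \<in> S \<rightarrow>\<^sub>M prob_algebra A"
begin

definition K :: "'s \<Rightarrow> 's measure" where "K s = bind (p s) (\<lambda>a. P (s, a))"

lemma K_meas: "K \<in> S \<rightarrow>\<^sub>M prob_algebra S"
proof -
  have "(\<lambda>(x,y). P (x,y)) \<in> S \<Otimes>\<^sub>M A \<rightarrow>\<^sub>M prob_algebra S" using P by simp
  from measurable_bind_prob_space2[OF p this] show ?thesis
    unfolding K_def[abs_def] .
qed

lemma step_eq: "step_dist P p mu = bind mu K"
  unfolding step_dist_def K_def[abs_def] by simp

lemma sd_0: "state_dist P p mu 0 = mu" by (simp add: state_dist_def)

lemma sd_Suc: "state_dist P p mu (Suc t) = bind (state_dist P p mu t) K"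
  by (simp add: state_dist_def step_eq)

lemma sd_space: "mu \<in> space (prob_algebra S) \<Longrightarrow> state_dist P p mu t \<in> space (prob_algebra S)"
proof (induction t)
  case 0 then show ?case by (simp add: sd_0)
next
  case (Suc t)
  show ?case unfolding sd_Suc
    using measurable_bind_prob_space[OF measurable_const[OF Suc.IH[OF Suc.prems]] K_meas,
        THEN measurable_space, of undefined "count_space UNIV"] by simp
qed

lemma sd_meas: "(\<lambda>s. state_dist P p (return S s) t) \<in> S \<rightarrow>\<^sub>M prob_algebra S"
proof (induction t)
  case 0 then show ?case by (simp add: sd_0)
next
  case (Suc t)
  show ?case unfolding sd_Suc by (rule measurable_bind_prob_space[OF Suc.IH K_meas])
qed

lemma sd_bind: "mu \<in> space (prob_algebra S) \<Longrightarrow>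
   state_dist P p mu t = bind mu (\<lambda>s. state_dist P p (return S s) t)"
proof (induction t)
  case 0 then show ?case by (simp add: sd_0 bind_return'' space_prob_algebra)
next
  case (Suc t)
  have "sets mu = sets S" using Suc.prems by (simp add: space_prob_algebra)
  have m: "(\<lambda>s. state_dist P p (return S s) t) \<in> mu \<rightarrow>\<^sub>M subprob_algebra S"
    using measurable_prob_algebraD[OF sd_meas] measurable_cong_sets[OF \<open>sets mu = sets S\<close> refl] by blast
  show ?case unfolding sd_Suc Suc.IH[OF Suc.prems]
    by (rule bind_assoc[OF m measurable_prob_algebraD[OF K_meas]])
qed

lemma sd_Suc_ret: "s \<in> space S \<Longrightarrow>
   state_dist P p (return S s) (Suc t) = bind (K s) (\<lambda>s'. state_dist P p (return S s') t)"
proof -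
  assume s: "s \<in> space S"
  have "state_dist P p (return S s) (Suc t) = state_dist P p (step_dist P p (return S s)) t"
    unfolding state_dist_def funpow_Suc_right comp_def ..
  also have "step_dist P p (return S s) = K s"
    unfolding step_eq using bind_return[OF measurable_prob_algebraD[OF K_meas] s] .
  also have "state_dist P p (K s) t = bind (K s) (\<lambda>s'. state_dist P p (return S s') t)"
    by (rule sd_bind[OF measurable_space[OF K_meas s]])
  finally show ?thesis .
qed



lemma u_meas: assumes f: "f \<in> borel_measurable (S \<Otimes>\<^sub>M A)"
  shows "pol_avg p f \<in> borel_measurable S"
proof -
  have D: "(\<lambda>s. distr (p s) (S \<Otimes>\<^sub>M A) (\<lambda>a. (s, a))) \<in> S \<rightarrow>\<^sub>M prob_algebra (S \<Otimes>\<^sub>M A)"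
    by (rule measurable_distr_prob_space2[OF p]) measurable
  have m: "(\<lambda>s. \<integral>x. f x \<partial>distr (p s) (S \<Otimes>\<^sub>M A) (\<lambda>a. (s, a))) \<in> borel_measurable S"
    by (rule measurable_compose[OF measurable_prob_algebraD[OF D] integral_measurable_subprob_algebra[OF f]])
  show ?thesis
  proof (rule measurable_cong[THEN iffD1, OF _ m])
    fix s assume s: "s \<in> space S"
    have ps: "p s \<in> space (prob_algebra A)" using measurable_space[OF p s] .
    have "(\<lambda>a. (s, a)) \<in> p s \<rightarrow>\<^sub>M S \<Otimes>\<^sub>M A"
      unfolding measurable_cong_sets[OF pa_facts(2)[OF ps] refl] by (rule measurable_Pair1'[OF s])
    then show "(\<integral>x. f x \<partial>distr (p s) (S \<Otimes>\<^sub>M A) (\<lambda>a. (s, a))) = pol_avg p f s"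
      unfolding pol_avg_def by (rule integral_distr) (rule f)
  qed
qed

lemma u_bound: assumes f: "f \<in> borel_measurable (S \<Otimes>\<^sub>M A)"
  and B: "\<And>s a. s \<in> space S \<Longrightarrow> a \<in> space A \<Longrightarrow> \<bar>f (s, a)\<bar> \<le> B" and s: "s \<in> space S"
  shows "\<bar>pol_avg p f s\<bar> \<le> B"
  unfolding pol_avg_def
  by (rule pa_bound[OF measurable_space[OF p s] measurable_Pair2[OF f s]]) (rule B[OF s])

definition T :: "('s \<times> 'a \<Rightarrow> real) \<Rightarrow> nat \<Rightarrow> 's \<Rightarrow> real" where
  "T f t s = (\<integral>x. pol_avg p f x \<partial>(state_dist P p (return S s) t))"

lemma pv_T: "pol_value S q f P p s = (\<Sum>t. q ^ t * T f t s)"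
  unfolding pol_value_def T_def ..

lemma T_meas: assumes f: "f \<in> borel_measurable (S \<Otimes>\<^sub>M A)"
  shows "T f t \<in> borel_measurable S"
proof -
  have "(\<lambda>s. (\<lambda>M. \<integral>x. pol_avg p f x \<partial>M) (state_dist P p (return S s) t)) \<in> borel_measurable S"
    by (rule measurable_compose[OF measurable_prob_algebraD[OF sd_meas] integral_measurable_subprob_algebra[OF u_meas[OF f]]])
  then show ?thesis unfolding T_def[abs_def] by simp
qed

lemma T_bound: assumes f: "f \<in> borel_measurable (S \<Otimes>\<^sub>M A)"
  and B: "\<And>s a. s \<in> space S \<Longrightarrow> a \<in> space A \<Longrightarrow> \<bar>f (s, a)\<bar> \<le> B" and s: "s \<in> space S"
  shows "\<bar>T f t s\<bar> \<le> B"
  unfolding T_def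
  by (rule pa_bound[OF measurable_space[OF sd_meas s] u_meas[OF f]]) (rule u_bound[OF f B])

lemma T_0: assumes f: "f \<in> borel_measurable (S \<Otimes>\<^sub>M A)" and s: "s \<in> space S"
  shows "T f 0 s = pol_avg p f s"
  unfolding T_def sd_0 by (rule integral_return[OF s u_meas[OF f]])

lemma T_Suc: assumes f: "f \<in> borel_measurable (S \<Otimes>\<^sub>M A)"
  and B: "\<And>s a. s \<in> space S \<Longrightarrow> a \<in> space A \<Longrightarrow> \<bar>f (s, a)\<bar> \<le> B" and s: "s \<in> space S"
  shows "T f (Suc t) s = (\<integral>y. T f t y \<partial>K s)"
  unfolding T_def sd_Suc_ret[OF s]
  by (rule pa_bind[OF measurable_space[OF K_meas s] sd_meas u_meas[OF f]]) (rule u_bound[OF f B])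


lemma pv_meas: assumes f: "f \<in> borel_measurable (S \<Otimes>\<^sub>M A)"
  shows "pol_value S q f P p \<in> borel_measurable S"
proof -
  note T_meas[OF f, measurable]
  have "(\<lambda>s. \<Sum>t. q ^ t * T f t s) \<in> borel_measurable S" by measurable
  then show ?thesis unfolding pv_T[abs_def] .
qed

lemma pv_bound: assumes f: "f \<in> borel_measurable (S \<Otimes>\<^sub>M A)"
  and B: "\<And>s a. s \<in> space S \<Longrightarrow> a \<in> space A \<Longrightarrow> \<bar>f (s, a)\<bar> \<le> B" and s: "s \<in> space S"
  and q: "0 \<le> q" "q < 1"
  shows "\<bar>pol_value S q f P p s\<bar> \<le> B / (1 - q)"
  unfolding pv_T by (rule ser_facts(2)[OF T_bound[OF f B s] q])

lemma pv_bellman: assumes f: "f \<in> borel_measurable (S \<Otimes>\<^sub>M A)"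
  and B: "\<And>s a. s \<in> space S \<Longrightarrow> a \<in> space A \<Longrightarrow> \<bar>f (s, a)\<bar> \<le> B" and s: "s \<in> space S"
  and q: "0 \<le> q" "q < 1"
  shows "pol_value S q f P p s = pol_avg p f s + q * (\<integral>y. pol_value S q f P p y \<partial>K s)"
proof -
  have sm: "summable (\<lambda>t. q ^ t * T f t s)" by (rule ser_facts(1)[OF T_bound[OF f B s] q])
  have sm2: "summable (\<lambda>t. q ^ t * T f (Suc t) s)" by (rule ser_facts(1)[OF T_bound[OF f B s] q])
  have "(\<Sum>t. q ^ t * T f t s) = q ^ 0 * T f 0 s + (\<Sum>t. q ^ Suc t * T f (Suc t) s)"
    using suminf_split_head[OF sm] by simp
  also have "(\<Sum>t. q ^ Suc t * T f (Suc t) s) = q * (\<Sum>t. q ^ t * T f (Suc t) s)"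
    using suminf_mult[OF sm2, of q] by (simp add: mult.assoc)
  also have "(\<Sum>t. q ^ t * T f (Suc t) s) = (\<Sum>t. q ^ t * (\<integral>y. T f t y \<partial>K s))"
    using T_Suc[OF f B s] by simp
  also have "\<dots> = (\<integral>y. (\<Sum>t. q ^ t * T f t y) \<partial>K s)"
    by (rule ser_int[OF measurable_space[OF K_meas s] T_meas[OF f] T_bound[OF f B] q, symmetric])
  finally show ?thesis unfolding pv_T T_0[OF f s] by simp
qed

lemma at_pv: assumes f: "f \<in> borel_measurable (S \<Otimes>\<^sub>M A)"
  and B: "\<And>s a. s \<in> space S \<Longrightarrow> a \<in> space A \<Longrightarrow> \<bar>f (s, a)\<bar> \<le> B"
  and q: "0 \<le> q" "q < 1" and mu: "mu \<in> space (prob_algebra S)"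
  shows "at_dist (pol_value S q f P p) mu = (\<Sum>t. q ^ t * (\<integral>x. pol_avg p f x \<partial>state_dist P p mu t))"
proof -
  have "at_dist (pol_value S q f P p) mu = (\<integral>s. (\<Sum>t. q ^ t * T f t s) \<partial>mu)"
    unfolding at_dist_def pv_T ..
  also have "\<dots> = (\<Sum>t. q ^ t * (\<integral>s. T f t s \<partial>mu))"
    by (rule ser_int[OF mu T_meas[OF f] T_bound[OF f B] q])
  also have "(\<lambda>t. \<integral>s. T f t s \<partial>mu) = (\<lambda>t. \<integral>x. pol_avg p f x \<partial>state_dist P p mu t)"
  proof
    fix t
    show "(\<integral>s. T f t s \<partial>mu) = (\<integral>x. pol_avg p f x \<partial>state_dist P p mu t)"
      unfolding T_def sd_bind[OF mu, of t]
      by (rule pa_bind[OF mu sd_meas u_meas[OF f], symmetric]) (rule u_bound[OF f B])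
  qed
  finally show ?thesis .
qed

lemma shiftK: fixes g :: "'s \<Rightarrow> real" assumes g: "g \<in> borel_measurable S" and B: "\<And>s. s \<in> space S \<Longrightarrow> \<bar>g s\<bar> \<le> B"
  and mu: "mu \<in> space (prob_algebra S)"
  shows "(\<integral>s. (\<integral>y. g y \<partial>K s) \<partial>state_dist P p mu t) = (\<integral>y. g y \<partial>state_dist P p mu (Suc t))"
  unfolding sd_Suc
  by (rule pa_bind[OF sd_space[OF mu] K_meas g B, symmetric])

lemma polP: fixes g :: "'s \<Rightarrow> real" assumes g: "g \<in> borel_measurable S" and B: "\<And>s. s \<in> space S \<Longrightarrow> \<bar>g s\<bar> \<le> B"
  and s: "s \<in> space S"
  shows "pol_avg p (\<lambda>sa. \<integral>y. g y \<partial>P sa) s = (\<integral>y. g y \<partial>K s)"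
  unfolding pol_avg_def K_def
  by (rule pa_bind[OF measurable_space[OF p s] measurable_Pair2[OF P s] g B, symmetric])

lemma Kint_meas: fixes g :: "'s \<Rightarrow> real" assumes g: "g \<in> borel_measurable S"
  shows "(\<lambda>s. \<integral>y. g y \<partial>K s) \<in> borel_measurable S"
  by (rule measurable_compose[OF measurable_prob_algebraD[OF K_meas] integral_measurable_subprob_algebra[OF g]])

lemma Kint_bound: fixes g :: "'s \<Rightarrow> real" assumes g: "g \<in> borel_measurable S" and B: "\<And>s. s \<in> space S \<Longrightarrow> \<bar>g s\<bar> \<le> B"
  and s: "s \<in> space S"
  shows "\<bar>\<integral>y. g y \<partial>K s\<bar> \<le> B"
  by (rule pa_bound[OF measurable_space[OF K_meas s] g B])


lemma at_cong: assumes "\<And>s. s \<in> space S \<Longrightarrow> f s = f' s" and mu: "mu \<in> space (prob_algebra S)"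
  shows "at_dist f mu = at_dist f' mu"
  unfolding at_dist_def by (rule Bochner_Integration.integral_cong[OF refl]) (use assms pa_facts(3)[OF mu] in auto)

lemma occ_cong: assumes "\<And>s. s \<in> space S \<Longrightarrow> f s = f' s" and mu: "mu \<in> space (prob_algebra S)"
  shows "occ_expect g P p mu f = occ_expect g P p mu f'"
proof -
  have "(\<integral>s. f s \<partial>state_dist P p mu t) = (\<integral>s. f' s \<partial>state_dist P p mu t)" for t
    by (rule Bochner_Integration.integral_cong[OF refl]) (use assms pa_facts(3)[OF sd_space[OF mu]] in auto)
  then show ?thesis unfolding occ_expect_def by simp
qed

lemma at_shift: fixes f :: "'s \<Rightarrow> real"
  assumes f: "f \<in> borel_measurable S" and B: "\<And>s. s \<in> space S \<Longrightarrow> \<bar>f s\<bar> \<le> B"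
    and mu: "mu \<in> space (prob_algebra S)"
  shows "at_dist (\<lambda>s. f s + c) mu = at_dist f mu + c"
  unfolding at_dist_def by (rule pa_add_const[OF mu f B])

lemma occ_shift: fixes f :: "'s \<Rightarrow> real"
  assumes f: "f \<in> borel_measurable S" and B: "\<And>s. s \<in> space S \<Longrightarrow> \<bar>f s\<bar> \<le> B"
    and mu: "mu \<in> space (prob_algebra S)" and g: "0 \<le> g" "g < 1"
  shows "occ_expect g P p mu (\<lambda>s. f s + c) = occ_expect g P p mu f + c"
proof -
  let ?a = "\<lambda>t. \<integral>s. f s \<partial>state_dist P p mu t"
  have e: "(\<integral>s. f s + c \<partial>state_dist P p mu t) = ?a t + c" for t
    by (rule pa_add_const[OF sd_space[OF mu] f B])
  have s1: "summable (\<lambda>t. g ^ t * ?a t)"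
    by (rule ser_facts(1)[OF pa_bound[OF sd_space[OF mu] f B] g])
  have s2: "summable (\<lambda>t. g ^ t * c)" using g by (simp add: summable_mult2)
  have "(\<Sum>t. g ^ t * (?a t + c)) = (\<Sum>t. g ^ t * ?a t) + (\<Sum>t. g ^ t * c)"
    using suminf_add[OF s1 s2] by (simp add: distrib_left)
  also have "(\<Sum>t. g ^ t * c) = c / (1 - g)"
    using g by (simp add: suminf_mult2[symmetric] suminf_geometric)
  finally show ?thesis unfolding occ_expect_def e using g by (simp add: field_simps)
qed

lemma occ_split: fixes f :: "'s \<Rightarrow> real"
  assumes f: "f \<in> borel_measurable S" and B: "\<And>s. s \<in> space S \<Longrightarrow> \<bar>f s\<bar> \<le> B"
    and mu: "mu \<in> space (prob_algebra S)" and g: "0 \<le> g" "g < 1"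
  shows "occ_expect g P p mu f = (1 - g) * (at_dist f mu + g * (\<Sum>t. g ^ t * (\<integral>s. f s \<partial>state_dist P p mu (Suc t))))"
proof -
  let ?a = "\<lambda>t. \<integral>s. f s \<partial>state_dist P p mu t"
  have s1: "summable (\<lambda>t. g ^ t * ?a t)"
    by (rule ser_facts(1)[OF pa_bound[OF sd_space[OF mu] f B] g])
  have s2: "summable (\<lambda>t. g ^ t * ?a (Suc t))"
    by (rule ser_facts(1)[OF pa_bound[OF sd_space[OF mu] f B] g])
  have "(\<Sum>t. g ^ t * ?a t) = g ^ 0 * ?a 0 + (\<Sum>t. g ^ Suc t * ?a (Suc t))"
    using suminf_split_head[OF s1] by simp
  also have "(\<Sum>t. g ^ Suc t * ?a (Suc t)) = g * (\<Sum>t. g ^ t * ?a (Suc t))"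
    using suminf_mult[OF s2, of g] by (simp add: mult.assoc)
  finally show ?thesis unfolding occ_expect_def at_dist_def sd_0 by simp
qed

lemma pv_shift:
  assumes f: "f \<in> borel_measurable (S \<Otimes>\<^sub>M A)"
  and B: "\<And>s a. s \<in> space S \<Longrightarrow> a \<in> space A \<Longrightarrow> \<bar>f (s, a)\<bar> \<le> B"
  and f': "\<And>s a. s \<in> space S \<Longrightarrow> a \<in> space A \<Longrightarrow> f' (s, a) = f (s, a) + k"
  and s: "s \<in> space S" and q: "0 \<le> q" "q < 1"
  shows "pol_value S q f' P p s = pol_value S q f P p s + k / (1 - q)"
proof -
  have u: "pol_avg p f' x = pol_avg p f x + k" if x: "x \<in> space S" for x
  proof -
    have px: "p x \<in> space (prob_algebra A)" by (rule measurable_space[OF p x])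
    have "pol_avg p f' x = (\<integral>a. f (x, a) + k \<partial>p x)"
      unfolding pol_avg_def by (rule Bochner_Integration.integral_cong[OF refl]) (use f' x pa_facts(3)[OF px] in auto)
    also have "\<dots> = pol_avg p f x + k"
      unfolding pol_avg_def by (rule pa_add_const[OF px measurable_Pair2[OF f x]]) (rule B[OF x])
    finally show ?thesis .
  qed
  have T: "T f' t s = T f t s + k" for t
  proof -
    have m: "state_dist P p (return S s) t \<in> space (prob_algebra S)" by (rule measurable_space[OF sd_meas s])
    have "T f' t s = (\<integral>x. pol_avg p f x + k \<partial>state_dist P p (return S s) t)"
      unfolding T_def by (rule Bochner_Integration.integral_cong[OF refl]) (use u pa_facts(3)[OF m] in auto)
    also have "\<dots> = T f t s + k"
      unfolding T_def by (rule pa_add_const[OF m u_meas[OF f]]) (rule u_bound[OF f B])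
    finally show ?thesis .
  qed
  have s1: "summable (\<lambda>t. q ^ t * T f t s)" by (rule ser_facts(1)[OF T_bound[OF f B s] q])
  have s2: "summable (\<lambda>t. q ^ t * k)" using q by (simp add: summable_mult2)
  have "(\<Sum>t. q ^ t * T f' t s) = (\<Sum>t. q ^ t * T f t s) + (\<Sum>t. q ^ t * k)"
    unfolding T using suminf_add[OF s1 s2] by (simp add: distrib_left)
  also have "(\<Sum>t. q ^ t * k) = k / (1 - q)"
    using q by (simp add: suminf_mult2[symmetric] suminf_geometric)
  finally show ?thesis unfolding pv_T .
qed

end

lemma opt_eq:
  assumes ps: "ps \<in> policies S A"
    and mx: "\<forall>p' \<in> policies S A. \<forall>s \<in> space S. pol_value S q f P p' s \<le> pol_value S q f P ps s"
    and s: "s \<in> space S"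
  shows "opt_value S A q f P s = pol_value S q f P ps s"
  unfolding opt_value_def by (rule cSup_eq_maximum) (use ps mx s in auto)



lemma aux_bnd: fixes x y c B :: real
  shows "0 \<le> x \<Longrightarrow> x \<le> 1 \<Longrightarrow> \<bar>y\<bar> \<le> B \<Longrightarrow> 0 \<le> c \<Longrightarrow> \<bar>x + c * y\<bar> \<le> 1 + c * B"
proof -
  assume a: "0 \<le> x" "x \<le> 1" "\<bar>y\<bar> \<le> B" "0 \<le> c"
  have "\<bar>c * y\<bar> \<le> c * B" using a by (simp add: abs_mult mult_left_mono)
  then show ?thesis using a by linarith
qed

lemma aux_cancel: fixes x u b y :: real shows "u \<noteq> 0 \<Longrightarrow> x / u * (b * u / y) = x * b / y"
  by (simp add: divide_simps)

theorem theorem1: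
  fixes S :: "'s measure" and A :: "'a measure"
    and P :: "'s \<times> 'a \<Rightarrow> 's measure" and r :: "'s \<times> 'a \<Rightarrow> real"
    and g lam b :: real and d0 :: "'s measure"
    and h :: "'s \<Rightarrow> real" and p :: "'s \<Rightarrow> 'a measure"
  assumes g: "0 \<le> g" "g < 1"
    and r_meas: "r \<in> borel_measurable (S \<Otimes>\<^sub>M A)"
    and r_range: "\<And>s a. s \<in> space S \<Longrightarrow> a \<in> space A \<Longrightarrow> 0 \<le> r (s, a) \<and> r (s, a) \<le> 1"
    and P_kernel: "P \<in> S \<Otimes>\<^sub>M A \<rightarrow>\<^sub>M prob_algebra S"
    and d0: "d0 \<in> space (prob_algebra S)"
    and opt_exists: "\<exists>ps \<in> policies S A. \<forall>p' \<in> policies S A. \<forall>s \<in> space S.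
                        pol_value S g r P p' s \<le> pol_value S g r P ps s"
    and p: "p \<in> policies S A"
    and h_meas: "h \<in> borel_measurable S"
    and h_bdd: "\<exists>B. \<forall>s \<in> space S. \<bar>h s\<bar> \<le> B"
    and lam: "0 \<le> lam" "lam \<le> 1"
    and opt_exists_reshaped: "\<exists>ps \<in> policies S A. \<forall>p' \<in> policies S A. \<forall>s \<in> space S.
                        pol_value S (lam * g) (reshaped_reward g lam r P h) P p' s
                          \<le> pol_value S (lam * g) (reshaped_reward g lam r P h) P ps s"
  shows "(at_dist (opt_value S A g r P) d0 - at_dist (pol_value S g r P p) d0
           = Regret S A g r P d0 h lam p + Bias S A g r P d0 h lam p)
         \<and> Bias S A g r P d0 (\<lambda>s. h s + b) lam p = Bias S A g r P d0 h lam p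
         \<and> Regret S A g r P d0 (\<lambda>s. h s + b) lam p = Regret S A g r P d0 h lam p"
proof -
  obtain Bh where Bh: "\<And>s. s \<in> space S \<Longrightarrow> \<bar>h s\<bar> \<le> Bh" using h_bdd by auto
  have pol: "p' \<in> policies S A \<Longrightarrow> mdpk S A P p'" for p'
    using P_kernel unfolding policies_def by unfold_locales auto
  have p_pol: "p \<in> policies S A" by (rule p)
  interpret mdpk S A P p using pol[OF p] .
  have q: "0 \<le> lam * g" "lam * g < 1"
    using g lam by (auto intro: mult_nonneg_nonneg) (metis g(2) mult_left_le_one_le order_le_less_trans g(1) lam)
  define c0 where "c0 = (1 - lam) * g"
  have c0: "0 \<le> c0" using g lam by (simp add: c0_def)
  have sa: "\<And>s a. s \<in> space S \<Longrightarrow> a \<in> space A \<Longrightarrow> (s, a) \<in> space (S \<Otimes>\<^sub>M A)"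
    by (simp add: space_pair_measure)
  have PS: "\<And>sa. sa \<in> space (S \<Otimes>\<^sub>M A) \<Longrightarrow> P sa \<in> space (prob_algebra S)"
    using measurable_space[OF P_kernel] .
  have Pint_meas: "(\<lambda>sa. \<integral>y. f y \<partial>P sa) \<in> borel_measurable (S \<Otimes>\<^sub>M A)"
    if f: "f \<in> borel_measurable S" for f :: "'s \<Rightarrow> real"
    by (rule measurable_compose[OF measurable_prob_algebraD[OF P_kernel] integral_measurable_subprob_algebra[OF f]])
  have Pint_bound: "\<bar>\<integral>y. f y \<partial>P (s, a)\<bar> \<le> B"
    if f: "f \<in> borel_measurable S" and B: "\<And>s. s \<in> space S \<Longrightarrow> \<bar>f s\<bar> \<le> B"
      and s: "s \<in> space S" and a: "a \<in> space A" for f :: "'s \<Rightarrow> real" and B s a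
    by (rule pa_bound[OF PS[OF sa[OF s a]] f B])
  have rt_meas: "reshaped_reward g lam r P hh \<in> borel_measurable (S \<Otimes>\<^sub>M A)"
    if hh: "hh \<in> borel_measurable S" for hh
    unfolding reshaped_reward_def[abs_def]
    by (intro borel_measurable_add borel_measurable_times borel_measurable_const r_meas Pint_meas hh)
  have rt_bound: "\<bar>reshaped_reward g lam r P hh (s, a)\<bar> \<le> 1 + c0 * B"
    if hh: "hh \<in> borel_measurable S" and B: "\<And>s. s \<in> space S \<Longrightarrow> \<bar>hh s\<bar> \<le> B"
      and s: "s \<in> space S" and a: "a \<in> space A" for hh B s a
    unfolding reshaped_reward_def c0_def[symmetric]
    by (rule aux_bnd) (use r_range[OF s a] Pint_bound[OF hh B s a] c0 in auto)

  let ?rt = "reshaped_reward g lam r P h"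
  define Brt where "Brt = 1 + c0 * Bh"
  have rtm: "?rt \<in> borel_measurable (S \<Otimes>\<^sub>M A)" by (rule rt_meas[OF h_meas])
  have rtb: "\<And>s a. s \<in> space S \<Longrightarrow> a \<in> space A \<Longrightarrow> \<bar>?rt (s, a)\<bar> \<le> Brt"
    unfolding Brt_def by (rule rt_bound[OF h_meas Bh])
  obtain ps' where ps': "ps' \<in> policies S A" and mx: "\<forall>p' \<in> policies S A. \<forall>s \<in> space S.
      pol_value S (lam * g) ?rt P p' s \<le> pol_value S (lam * g) ?rt P ps' s"
    using opt_exists_reshaped by blast
  interpret ps': mdpk S A P ps' using pol[OF ps'] .
  define W where "W = opt_value S A (lam * g) ?rt P"
  define BW where "BW = Brt / (1 - lam * g)"
  have W_eq: "\<And>s. s \<in> space S \<Longrightarrow> W s = pol_value S (lam * g) ?rt P ps' s"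
    unfolding W_def by (rule opt_eq[OF ps' mx])
  have Wm: "W \<in> borel_measurable S"
    using ps'.pv_meas[OF rtm, of "lam * g"] measurable_cong[of S W, OF W_eq] by simp
  have Wb: "\<And>s. s \<in> space S \<Longrightarrow> \<bar>W s\<bar> \<le> BW"
    unfolding BW_def using W_eq ps'.pv_bound[OF rtm rtb _ q] by simp
  define Vp where "Vp = pol_value S (lam * g) ?rt P p"
  have Vm: "Vp \<in> borel_measurable S" unfolding Vp_def by (rule pv_meas[OF rtm])
  have Vb: "\<And>s. s \<in> space S \<Longrightarrow> \<bar>Vp s\<bar> \<le> BW"
    unfolding BW_def Vp_def using pv_bound[OF rtm rtb _ q] by simp
  have rt_avg: "pol_avg p ?rt s = pol_avg p r s + c0 * (\<integral>y. h y \<partial>K s)" if s: "s \<in> space S" for s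
  proof -
    have ps: "p s \<in> space (prob_algebra A)" by (rule measurable_space[OF p s])
    have i1: "integrable (p s) (\<lambda>a. r (s, a))"
      by (rule pa_integrable[OF ps measurable_Pair2[OF r_meas s]]) (use r_range[OF s] in force)
    have i2: "integrable (p s) (\<lambda>a. \<integral>y. h y \<partial>P (s, a))"
      by (rule pa_integrable[OF ps measurable_Pair2[OF Pint_meas[OF h_meas] s]]) (rule Pint_bound[OF h_meas Bh s])
    have "pol_avg p ?rt s = pol_avg p r s + c0 * pol_avg p (\<lambda>sa. \<integral>y. h y \<partial>P sa) s"
      unfolding pol_avg_def reshaped_reward_def c0_def[symmetric] using i1 i2 by simp
    then show ?thesis using polP[OF h_meas Bh s] by simp
  qed
  have bell: "Vp s = pol_avg p r s + c0 * (\<integral>y. h y \<partial>K s) + lam * g * (\<integral>y. Vp y \<partial>K s)"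
    if s: "s \<in> space S" for s
    unfolding Vp_def using pv_bellman[OF rtm rtb s q] rt_avg[OF s] by simp
  let ?dt = "state_dist P p d0"
  have dt: "\<And>t. ?dt t \<in> space (prob_algebra S)" by (rule sd_space[OF d0])
  have rm: "pol_avg p r \<in> borel_measurable S" by (rule u_meas[OF r_meas])
  have rb: "\<And>s. s \<in> space S \<Longrightarrow> \<bar>pol_avg p r s\<bar> \<le> 1"
    by (rule u_bound[OF r_meas]) (use r_range in force)
  have F2: "(\<integral>s. Vp s \<partial>?dt t) = (\<integral>s. pol_avg p r s \<partial>?dt t) + c0 * (\<integral>s. h s \<partial>?dt (Suc t))
      + lam * g * (\<integral>s. Vp s \<partial>?dt (Suc t))" for t
  proof -
    have "(\<integral>s. Vp s \<partial>?dt t) = (\<integral>s. pol_avg p r s + c0 * (\<integral>y. h y \<partial>K s) + lam * g * (\<integral>y. Vp y \<partial>K s) \<partial>?dt t)"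
      by (rule Bochner_Integration.integral_cong[OF refl]) (use bell pa_facts(3)[OF dt] in auto)
    also have "\<dots> = (\<integral>s. pol_avg p r s \<partial>?dt t) + c0 * (\<integral>s. (\<integral>y. h y \<partial>K s) \<partial>?dt t)
        + lam * g * (\<integral>s. (\<integral>y. Vp y \<partial>K s) \<partial>?dt t)"
    proof -
      have i1: "integrable (?dt t) (pol_avg p r)" by (rule pa_integrable[OF dt rm rb])
      have i2: "integrable (?dt t) (\<lambda>s. \<integral>y. h y \<partial>K s)"
        by (rule pa_integrable[OF dt Kint_meas[OF h_meas] Kint_bound[OF h_meas Bh]])
      have i3: "integrable (?dt t) (\<lambda>s. \<integral>y. Vp y \<partial>K s)"
        by (rule pa_integrable[OF dt Kint_meas[OF Vm] Kint_bound[OF Vm Vb]])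
      show ?thesis using i1 i2 i3 by simp
    qed
    also have "(\<integral>s. (\<integral>y. h y \<partial>K s) \<partial>?dt t) = (\<integral>s. h s \<partial>?dt (Suc t))"
      by (rule shiftK[OF h_meas Bh d0])
    also have "(\<integral>s. (\<integral>y. Vp y \<partial>K s) \<partial>?dt t) = (\<integral>s. Vp s \<partial>?dt (Suc t))"
      by (rule shiftK[OF Vm Vb d0])
    finally show ?thesis .
  qed
  let ?bf = "pol_avg p (\<lambda>sa. \<integral>y. h y - W y \<partial>P sa)"
  have F3: "(\<integral>s. ?bf s \<partial>?dt t) = (\<integral>s. h s \<partial>?dt (Suc t)) - (\<integral>s. W s \<partial>?dt (Suc t))" for t
  proof -
    have hWm: "(\<lambda>y. h y - W y) \<in> borel_measurable S" using h_meas Wm by simp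
    have hWb: "\<And>y. y \<in> space S \<Longrightarrow> \<bar>h y - W y\<bar> \<le> Bh + BW"
      using Bh Wb by (smt (verit))
    have pt: "?bf s = (\<integral>y. h y \<partial>K s) - (\<integral>y. W y \<partial>K s)" if s: "s \<in> space S" for s
    proof -
      have Ks: "K s \<in> space (prob_algebra S)" by (rule measurable_space[OF K_meas s])
      have "?bf s = (\<integral>y. h y - W y \<partial>K s)" by (rule polP[OF hWm hWb s])
      also have "\<dots> = (\<integral>y. h y \<partial>K s) - (\<integral>y. W y \<partial>K s)"
        using pa_integrable[OF Ks h_meas Bh] pa_integrable[OF Ks Wm Wb] by simp
      finally show ?thesis .
    qed
    have "(\<integral>s. ?bf s \<partial>?dt t) = (\<integral>s. (\<integral>y. h y \<partial>K s) - (\<integral>y. W y \<partial>K s) \<partial>?dt t)"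
      by (rule Bochner_Integration.integral_cong[OF refl]) (use pt pa_facts(3)[OF dt] in auto)
    also have "\<dots> = (\<integral>s. (\<integral>y. h y \<partial>K s) \<partial>?dt t) - (\<integral>s. (\<integral>y. W y \<partial>K s) \<partial>?dt t)"
      using pa_integrable[OF dt Kint_meas[OF h_meas] Kint_bound[OF h_meas Bh]]
        pa_integrable[OF dt Kint_meas[OF Wm] Kint_bound[OF Wm Wb]] by simp
    also have "\<dots> = (\<integral>s. h s \<partial>?dt (Suc t)) - (\<integral>s. W s \<partial>?dt (Suc t))"
      using shiftK[OF h_meas Bh d0] shiftK[OF Wm Wb d0] by simp
    finally show ?thesis .
  qed

  define aR where "aR t = (\<integral>s. pol_avg p r s \<partial>?dt t)" for t
  define aH where "aH t = (\<integral>s. h s \<partial>?dt t)" for t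
  define aV where "aV t = (\<integral>s. Vp s \<partial>?dt t)" for t
  define aW where "aW t = (\<integral>s. W s \<partial>?dt t)" for t
  have aRb: "\<bar>aR t\<bar> \<le> 1" for t unfolding aR_def by (rule pa_bound[OF dt rm rb])
  have aHb: "\<bar>aH t\<bar> \<le> Bh" for t unfolding aH_def by (rule pa_bound[OF dt h_meas Bh])
  have aVb: "\<bar>aV t\<bar> \<le> BW" for t unfolding aV_def by (rule pa_bound[OF dt Vm Vb])
  have aWb: "\<bar>aW t\<bar> \<le> BW" for t unfolding aW_def by (rule pa_bound[OF dt Wm Wb])
  have sR: "summable (\<lambda>t. g ^ t * aR t)" by (rule ser_facts(1)[OF aRb g])
  have sV: "summable (\<lambda>t. g ^ t * aV t)" by (rule ser_facts(1)[OF aVb g])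
  have sH': "summable (\<lambda>t. g ^ t * aH (Suc t))" by (rule ser_facts(1)[OF aHb g])
  have sV': "summable (\<lambda>t. g ^ t * aV (Suc t))" by (rule ser_facts(1)[OF aVb g])
  have sW': "summable (\<lambda>t. g ^ t * aW (Suc t))" by (rule ser_facts(1)[OF aWb g])
  define AR where "AR = (\<Sum>t. g ^ t * aR t)"
  define SV where "SV = (\<Sum>t. g ^ t * aV t)"
  define SV' where "SV' = (\<Sum>t. g ^ t * aV (Suc t))"
  define SH' where "SH' = (\<Sum>t. g ^ t * aH (Suc t))"
  define SW' where "SW' = (\<Sum>t. g ^ t * aW (Suc t))"
  have eSV: "SV = AR + c0 * SH' + lam * g * SV'"
  proof -
    have "g ^ t * aV t = (g ^ t * aR t + c0 * (g ^ t * aH (Suc t))) + lam * g * (g ^ t * aV (Suc t))" for t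
      unfolding aR_def aH_def aV_def F2[of t] by (simp add: algebra_simps)
    then have "(\<lambda>t. g ^ t * aV t) = (\<lambda>t. (g ^ t * aR t + c0 * (g ^ t * aH (Suc t))) + lam * g * (g ^ t * aV (Suc t)))"
      by simp
    then have "SV = (\<Sum>t. (g ^ t * aR t + c0 * (g ^ t * aH (Suc t))) + lam * g * (g ^ t * aV (Suc t)))"
      unfolding SV_def by simp
    also have "\<dots> = (\<Sum>t. g ^ t * aR t + c0 * (g ^ t * aH (Suc t))) + (\<Sum>t. lam * g * (g ^ t * aV (Suc t)))"
      by (rule suminf_add[symmetric]) (use sR sH' sV' in \<open>auto intro: summable_add summable_mult\<close>)
    also have "(\<Sum>t. g ^ t * aR t + c0 * (g ^ t * aH (Suc t))) = AR + c0 * SH'"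
      unfolding AR_def SH'_def using suminf_add[OF sR summable_mult[OF sH', of c0]] suminf_mult[OF sH', of c0] by simp
    also have "(\<Sum>t. lam * g * (g ^ t * aV (Suc t))) = lam * g * SV'"
      unfolding SV'_def by (rule suminf_mult[OF sV'])
    finally show ?thesis .
  qed
  have occV: "occ_expect g P p d0 Vp = (1 - g) * SV" unfolding occ_expect_def SV_def aV_def ..
  have occV2: "occ_expect g P p d0 Vp = (1 - g) * (at_dist Vp d0 + g * SV')"
    unfolding SV'_def aV_def by (rule occ_split[OF Vm Vb d0 g])
  have occW: "occ_expect g P p d0 W = (1 - g) * (at_dist W d0 + g * SW')"
    unfolding SW'_def aW_def by (rule occ_split[OF Wm Wb d0 g])
  have occB: "occ_expect g P p d0 ?bf = (1 - g) * (SH' - SW')"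
  proof -
    have "occ_expect g P p d0 ?bf = (1 - g) * (\<Sum>t. g ^ t * aH (Suc t) - g ^ t * aW (Suc t))"
      unfolding occ_expect_def F3 aH_def aW_def by (simp add: right_diff_distrib)
    also have "(\<Sum>t. g ^ t * aH (Suc t) - g ^ t * aW (Suc t)) = SH' - SW'"
      unfolding SH'_def SW'_def by (rule suminf_diff[OF sH' sW', symmetric])
    finally show ?thesis .
  qed
  have atV: "at_dist (pol_value S g r P p) d0 = AR"
    unfolding AR_def aR_def by (rule at_pv[OF r_meas _ g d0]) (use r_range in force)
  have g1: "1 - g \<noteq> 0" using g by simp
  have xV: "SV = at_dist Vp d0 + g * SV'" using occV occV2 g1 by simp
  have part1: "at_dist (opt_value S A g r P) d0 - at_dist (pol_value S g r P p) d0
           = Regret S A g r P d0 h lam p + Bias S A g r P d0 h lam p"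
  proof -
    have R: "Regret S A g r P d0 h lam p = lam * (at_dist W d0 - at_dist Vp d0)
        + (1 - lam) * ((at_dist W d0 + g * SW') - SV)"
      unfolding Regret_def Let_def W_def[symmetric] Vp_def[symmetric] occW occV using g1 by (simp add: field_simps)
    have B: "Bias S A g r P d0 h lam p = at_dist (opt_value S A g r P) d0 - at_dist W d0
        + g * (1 - lam) * (SH' - SW')"
      unfolding Bias_def Let_def W_def[symmetric] occB using g1 by simp
    show ?thesis unfolding R B atV using eSV xV unfolding c0_def by algebra
  qed

  let ?hb = "\<lambda>s. h s + b"
  let ?rtb = "reshaped_reward g lam r P ?hb"
  have hbm: "?hb \<in> borel_measurable S" using h_meas by simp
  have hbb: "\<And>s. s \<in> space S \<Longrightarrow> \<bar>?hb s\<bar> \<le> Bh + \<bar>b\<bar>" using Bh by (smt (verit))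
  have rtbm: "?rtb \<in> borel_measurable (S \<Otimes>\<^sub>M A)" by (rule rt_meas[OF hbm])
  have rtbe: "?rtb (s, a) = ?rt (s, a) + c0 * b" if s: "s \<in> space S" and a: "a \<in> space A" for s a
  proof -
    have "(\<integral>y. h y + b \<partial>P (s, a)) = (\<integral>y. h y \<partial>P (s, a)) + b"
      by (rule pa_add_const[OF PS[OF sa[OF s a]] h_meas Bh])
    then show ?thesis unfolding reshaped_reward_def c0_def by (simp add: algebra_simps)
  qed
  define cc where "cc = c0 * b / (1 - lam * g)"
  have pvs: "pol_value S (lam * g) ?rtb P p' s = pol_value S (lam * g) ?rt P p' s + cc"
    if p': "p' \<in> policies S A" and s: "s \<in> space S" for p' s
  proof -
    interpret p': mdpk S A P p' using pol[OF p'] .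
    show ?thesis unfolding cc_def by (rule p'.pv_shift[OF rtm rtb rtbe s q])
  qed
  have mxb: "\<forall>p' \<in> policies S A. \<forall>s \<in> space S.
      pol_value S (lam * g) ?rtb P p' s \<le> pol_value S (lam * g) ?rtb P ps' s"
    using mx pvs ps' by simp
  have Wbe: "opt_value S A (lam * g) ?rtb P s = W s + cc" if s: "s \<in> space S" for s
    using opt_eq[OF ps' mxb s] W_eq[OF s] pvs[OF ps' s] by simp
  have Vbe: "pol_value S (lam * g) ?rtb P p s = Vp s + cc" if s: "s \<in> space S" for s
    unfolding Vp_def by (rule pvs[OF p_pol s])
  have part3: "Regret S A g r P d0 ?hb lam p = Regret S A g r P d0 h lam p"
  proof -
    have e1: "at_dist (opt_value S A (lam * g) ?rtb P) d0 = at_dist W d0 + cc"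
      using at_cong[OF Wbe d0] at_shift[OF Wm Wb d0] by simp
    have e2: "at_dist (pol_value S (lam * g) ?rtb P p) d0 = at_dist Vp d0 + cc"
      using at_cong[OF Vbe d0] at_shift[OF Vm Vb d0] by simp
    have e3: "occ_expect g P p d0 (opt_value S A (lam * g) ?rtb P) = occ_expect g P p d0 W + cc"
      using occ_cong[OF Wbe d0] occ_shift[OF Wm Wb d0 g] by simp
    have e4: "occ_expect g P p d0 (pol_value S (lam * g) ?rtb P p) = occ_expect g P p d0 Vp + cc"
      using occ_cong[OF Vbe d0] occ_shift[OF Vm Vb d0 g] by simp
    show ?thesis unfolding Regret_def Let_def W_def[symmetric] Vp_def[symmetric] e1 e2 e3 e4
      by (simp add: algebra_simps)
  qed
  have part2: "Bias S A g r P d0 ?hb lam p = Bias S A g r P d0 h lam p"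
  proof -
    have e1: "at_dist (opt_value S A (lam * g) ?rtb P) d0 = at_dist W d0 + cc"
      using at_cong[OF Wbe d0] at_shift[OF Wm Wb d0] by simp
    have hWm: "(\<lambda>y. h y - W y) \<in> borel_measurable S" using h_meas Wm by simp
    have hWb: "\<And>y. y \<in> space S \<Longrightarrow> \<bar>h y - W y\<bar> \<le> Bh + BW"
      using Bh Wb by (smt (verit))
    have inner: "(\<integral>y. h y + b - opt_value S A (lam * g) ?rtb P y \<partial>P (s, a))
        = (\<integral>y. h y - W y \<partial>P (s, a)) + (b - cc)"
      if s: "s \<in> space S" and a: "a \<in> space A" for s a
    proof -
      have Psa: "P (s, a) \<in> space (prob_algebra S)" by (rule PS[OF sa[OF s a]])
      have "(\<integral>y. h y + b - opt_value S A (lam * g) ?rtb P y \<partial>P (s, a))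
          = (\<integral>y. h y - W y + (b - cc) \<partial>P (s, a))"
        by (rule Bochner_Integration.integral_cong[OF refl]) (use Wbe pa_facts(3)[OF Psa] in auto)
      also have "\<dots> = (\<integral>y. h y - W y \<partial>P (s, a)) + (b - cc)"
        by (rule pa_add_const[OF Psa hWm hWb])
      finally show ?thesis .
    qed
    have outer: "pol_avg p (\<lambda>sa. \<integral>y. h y + b - opt_value S A (lam * g) ?rtb P y \<partial>P sa) s
        = ?bf s + (b - cc)" if s: "s \<in> space S" for s
    proof -
      have ps: "p s \<in> space (prob_algebra A)" by (rule measurable_space[OF p s])
      have "pol_avg p (\<lambda>sa. \<integral>y. h y + b - opt_value S A (lam * g) ?rtb P y \<partial>P sa) s
          = (\<integral>a. (\<integral>y. h y - W y \<partial>P (s, a)) + (b - cc) \<partial>p s)"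
        unfolding pol_avg_def
        by (rule Bochner_Integration.integral_cong[OF refl]) (use inner[OF s] pa_facts(3)[OF ps] in auto)
      also have "\<dots> = ?bf s + (b - cc)"
        unfolding pol_avg_def
        by (rule pa_add_const[OF ps measurable_Pair2[OF Pint_meas[OF hWm] s]])
          (rule Pint_bound[OF hWm hWb s])
      finally show ?thesis .
    qed
    have bfm: "?bf \<in> borel_measurable S" by (rule u_meas[OF Pint_meas[OF hWm]])
    have bfb: "\<And>s. s \<in> space S \<Longrightarrow> \<bar>?bf s\<bar> \<le> Bh + BW"
      by (rule u_bound[OF Pint_meas[OF hWm]]) (rule Pint_bound[OF hWm hWb])
    have e2: "occ_expect g P p d0 (pol_avg p (\<lambda>sa. \<integral>y. h y + b - opt_value S A (lam * g) ?rtb P y \<partial>P sa))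
        = occ_expect g P p d0 ?bf + (b - cc)"
      using occ_cong[OF outer d0] occ_shift[OF bfm bfb d0 g] by simp
    have q1: "1 - lam * g \<noteq> 0" using q by simp
    have cc_eq: "g * (1 - lam) / (1 - g) * (b - cc) = cc"
    proof -
      have e: "b - cc = b * (1 - g) / (1 - lam * g)"
        unfolding cc_def c0_def using q1 by (simp add: field_simps)
      have f: "g * (1 - lam) / (1 - g) * (b * (1 - g) / (1 - lam * g)) = g * (1 - lam) * b / (1 - lam * g)"
        by (rule aux_cancel[OF g1])
      have "g * (1 - lam) / (1 - g) * (b - cc) = g * (1 - lam) * b / (1 - lam * g)"
        unfolding e by (rule f)
      also have "\<dots> = cc" unfolding cc_def c0_def by simp
      finally show ?thesis .
    qed
    show ?thesis unfolding Bias_def Let_def W_def[symmetric] e1 e2 distrib_left cc_eq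
      by simp
  qed
  show ?thesis using part1 part2 part3 by simp
qed
end
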